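(* Let $I\subset\mathbb{R}$ be an open interval, $W\subset I$ countable, and $\hat I$ the divided interval of $I$ at $W$. If $\mathcal{F}$ is a $G$ local system on $\hat I$ (for any $k$-linear group $G$), then for every basis interval $H\subset\hat I$ the restriction map $\mathcal{F}(H)\to\mathcal{F}(\operatorname{trim} H)$ is an isomorphism.
   Context: The divided interval of $I$ at $W$ is the set $\hat I = \{w^{L}, \hat w, w^{R} : w\in W\}\sqcup (I\smallsetminus W)$, with $\pi\colon\hat I\to I$ sending $w^L,\hat w,w^R$ to $w$ and fixing $I\smallsetminus W$; it is totally ordered so that $\pi$ is order preserving and $w^L<\hat w<w^R$. For $a,b\in\hat I\cup\{\pm\infty\}$, $(a,b)=\{s: a<s<b\}$; basis intervals are the nonempty $(a,b)$ other than those with $a=w^L$ or $b=w^R$, and they generate the topology of $\hat I$. For a basis interval $H$, $\operatorname{trim}H$ is $H$ with its least element and its greatest element removed (if they exist); it is again a basis interval. A $k$-linear group $G$ is a subgroup of $\mathrm{GL}(R_G)$ for a finite-dimensional $k$-vector space $R_G$; $\mathcal{C}_G$ is the smallest subcategory of $k$-vector spaces containing $R_G$ and the morphisms $G$ and having all limits and filtered colimits; a $G$ local system is a locally constant sheaf with values in $\mathcal{C}_G$ all of whose stalks are isomorphic to $R_G$. *)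

theory Defs
  imports "HOL-Analysis.Analysis"
begin

text \<open>Points of the divided interval are encoded as pairs (x, t) of a real and an integer tag:
  a point x of I outside W is (x, 0); a point w of W is divided into
  w^L = (w, -1), hat w = (w, 0), w^R = (w, 1).  The projection pi is fst.\<close>

definition divided_interval :: "real set \<Rightarrow> real set \<Rightarrow> (real \<times> int) set" where
  "divided_interval I W =
     {(x, t). x \<in> I \<and> (if x \<in> W then t \<in> {-1, 0, 1} else t = 0)}"

definition dless :: "real \<times> int \<Rightarrow> real \<times> int \<Rightarrow> bool" where
  "dless p q \<longleftrightarrow> fst p < fst q \<or> (fst p = fst q \<and> snd p < snd q)"

text \<open>Open interval (a,b) in the divided interval; endpoints are elements of the divided
  interval or infinite: lower endpoint None means -infinity, upper endpoint None means
  +infinity.\<close>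

definition dinterval ::
  "(real \<times> int) set \<Rightarrow> (real \<times> int) option \<Rightarrow> (real \<times> int) option \<Rightarrow> (real \<times> int) set" where
  "dinterval X lo hi =
     {s \<in> X. (\<forall>a. lo = Some a \<longrightarrow> dless a s) \<and> (\<forall>b. hi = Some b \<longrightarrow> dless s b)}"

definition basis_intervals :: "real set \<Rightarrow> real set \<Rightarrow> (real \<times> int) set set" where
  "basis_intervals I W =
     {H. \<exists>lo hi.
          (\<forall>a. lo = Some a \<longrightarrow> a \<in> divided_interval I W \<and> \<not> (fst a \<in> W \<and> snd a = -1)) \<and>
          (\<forall>b. hi = Some b \<longrightarrow> b \<in> divided_interval I W \<and> \<not> (fst b \<in> W \<and> snd b = 1)) \<and>
          H = dinterval (divided_interval I W) lo hi \<and> H \<noteq> {}}"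

definition divided_topology :: "real set \<Rightarrow> real set \<Rightarrow> (real \<times> int) topology" where
  "divided_topology I W = topology_generated_by (basis_intervals I W)"

definition trim :: "(real \<times> int) set \<Rightarrow> (real \<times> int) set" where
  "trim H = H - {s \<in> H. \<forall>t \<in> H. t \<noteq> s \<longrightarrow> dless s t}
              - {s \<in> H. \<forall>t \<in> H. t \<noteq> s \<longrightarrow> dless t s}"

definition linear_on ::
  "('k \<Rightarrow> 'v::ab_group_add \<Rightarrow> 'v) \<Rightarrow> ('k \<Rightarrow> 'u::ab_group_add \<Rightarrow> 'u) \<Rightarrow> 'v set \<Rightarrow> ('v \<Rightarrow> 'u) \<Rightarrow> bool" where
  "linear_on s1 s2 S f \<longleftrightarrow>
     (\<forall>x\<in>S. \<forall>y\<in>S. f (x + y) = f x + f y) \<and> (\<forall>c. \<forall>x\<in>S. f (s1 c x) = s2 c (f x))"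

text \<open>A sheaf of k-vector spaces on a topological space T: the space of sections over an
  open set U is the linear subspace F U of the ambient k-vector space 'v, and
  res U V is the restriction map F U \<rightarrow> F V.\<close>

definition vs_sheaf ::
  "'a topology \<Rightarrow> ('k::field \<Rightarrow> 'v::ab_group_add \<Rightarrow> 'v) \<Rightarrow> ('a set \<Rightarrow> 'v set)
     \<Rightarrow> ('a set \<Rightarrow> 'a set \<Rightarrow> 'v \<Rightarrow> 'v) \<Rightarrow> bool" where
  "vs_sheaf T sc F res \<longleftrightarrow>
     vector_space sc \<and>
     (\<forall>U. openin T U \<longrightarrow> module.subspace sc (F U)) \<and>
     (\<forall>U V. openin T U \<and> openin T V \<and> V \<subseteq> U \<longrightarrow>
        linear_on sc sc (F U) (res U V) \<and> res U V ` F U \<subseteq> F V) \<and>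
     (\<forall>U. openin T U \<longrightarrow> (\<forall>s\<in>F U. res U U s = s)) \<and>
     (\<forall>U V W. openin T U \<and> openin T V \<and> openin T W \<and> W \<subseteq> V \<and> V \<subseteq> U \<longrightarrow>
        (\<forall>s\<in>F U. res V W (res U V s) = res U W s)) \<and>
     \<comment> \<open>locality\<close>
     (\<forall>U \<U>. openin T U \<and> (\<forall>V\<in>\<U>. openin T V) \<and> \<Union>\<U> = U \<longrightarrow>
        (\<forall>s\<in>F U. \<forall>t\<in>F U. (\<forall>V\<in>\<U>. res U V s = res U V t) \<longrightarrow> s = t)) \<and>
     \<comment> \<open>gluing\<close>
     (\<forall>U \<U> g. openin T U \<and> (\<forall>V\<in>\<U>. openin T V) \<and> \<Union>\<U> = U \<and>
        (\<forall>V\<in>\<U>. g V \<in> F V) \<and>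
        (\<forall>V\<in>\<U>. \<forall>V'\<in>\<U>. res V (V \<inter> V') (g V) = res V' (V \<inter> V') (g V')) \<longrightarrow>
        (\<exists>s\<in>F U. \<forall>V\<in>\<U>. res U V s = g V))"

text \<open>Sections of the constant sheaf with value the vector space 'w over an open set Q:
  the locally constant functions Q \<rightarrow> 'w (extended by 0 outside Q).\<close>

definition loc_const_sections :: "'a topology \<Rightarrow> 'a set \<Rightarrow> ('a \<Rightarrow> 'w::zero) set" where
  "loc_const_sections T Q =
     {f. (\<forall>y. y \<notin> Q \<longrightarrow> f y = 0) \<and>
         (\<forall>y\<in>Q. \<exists>N. openin T N \<and> y \<in> N \<and> N \<subseteq> Q \<and> (\<forall>z\<in>N. f z = f y))}"

text \<open>A local system with stalk R (the whole k-vector space 'w): a sheaf of k-vector spaces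
  which is locally isomorphic to the constant sheaf with value R, i.e. every point has an
  open neighbourhood U on which F restricted to U is isomorphic (by linear bijections
  compatible with restriction) to the constant sheaf with value R.\<close>

definition local_system ::
  "'a topology \<Rightarrow> ('k::field \<Rightarrow> 'v::ab_group_add \<Rightarrow> 'v) \<Rightarrow> ('k \<Rightarrow> 'w::ab_group_add \<Rightarrow> 'w)
     \<Rightarrow> ('a set \<Rightarrow> 'v set) \<Rightarrow> ('a set \<Rightarrow> 'a set \<Rightarrow> 'v \<Rightarrow> 'v) \<Rightarrow> bool" where
  "local_system T sc scW F res \<longleftrightarrow>
     vs_sheaf T sc F res \<and>
     (\<forall>x\<in>topspace T. \<exists>U \<phi>. openin T U \<and> x \<in> U \<and>
        (\<forall>Q. openin T Q \<and> Q \<subseteq> U \<longrightarrow>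
           bij_betw (\<phi> Q) (F Q) (loc_const_sections T Q) \<and>
           (\<forall>s\<in>F Q. \<forall>t\<in>F Q. \<forall>y. \<phi> Q (s + t) y = \<phi> Q s y + \<phi> Q t y) \<and>
           (\<forall>c. \<forall>s\<in>F Q. \<forall>y. \<phi> Q (sc c s) y = scW c (\<phi> Q s y)) \<and>
           (\<forall>Q'. openin T Q' \<and> Q' \<subseteq> Q \<longrightarrow>
              (\<forall>s\<in>F Q. \<forall>y\<in>Q'. \<phi> Q' (res Q Q' s) y = \<phi> Q s y))))"

end

theory Submission imports Defs begin

lemma dless_trans: "dless a b \<Longrightarrow> dless b c \<Longrightarrow> dless a c"
  unfolding dless_def by auto
lemma dless_irrefl[simp]: "\<not> dless a a"
  unfolding dless_def by auto
lemma dless_asym: "dless a b \<Longrightarrow> \<not> dless b a"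
  unfolding dless_def by auto
lemma dless_total: "a \<noteq> b \<Longrightarrow> dless a b \<or> dless b a"
  unfolding dless_def by (cases a; cases b) auto

fun maxo :: "(real \<times> int) option \<Rightarrow> (real \<times> int) option \<Rightarrow> (real \<times> int) option" where
  "maxo None b = b" | "maxo a None = a" | "maxo (Some a) (Some b) = Some (if dless a b then b else a)"
fun mino :: "(real \<times> int) option \<Rightarrow> (real \<times> int) option \<Rightarrow> (real \<times> int) option" where
  "mino None b = b" | "mino a None = a" | "mino (Some a) (Some b) = Some (if dless a b then a else b)"

lemma maxo_iff: "(\<forall>a. maxo l1 l2 = Some a \<longrightarrow> dless a s) \<longleftrightarrow>
   (\<forall>a. l1 = Some a \<longrightarrow> dless a s) \<and> (\<forall>a. l2 = Some a \<longrightarrow> dless a s)"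
  by (cases l1; cases l2) (auto simp: dless_def)
lemma mino_iff: "(\<forall>a. mino l1 l2 = Some a \<longrightarrow> dless s a) \<longleftrightarrow>
   (\<forall>a. l1 = Some a \<longrightarrow> dless s a) \<and> (\<forall>a. l2 = Some a \<longrightarrow> dless s a)"
  by (cases l1; cases l2) (auto simp: dless_def)
lemma maxo_cases: "maxo l1 l2 = Some a \<Longrightarrow> l1 = Some a \<or> l2 = Some a"
  by (cases l1; cases l2) (auto split: if_splits)
lemma mino_cases: "mino l1 l2 = Some a \<Longrightarrow> l1 = Some a \<or> l2 = Some a"
  by (cases l1; cases l2) (auto split: if_splits)

lemma dinterval_Int: "dinterval X l1 h1 \<inter> dinterval X l2 h2 = dinterval X (maxo l1 l2) (mino h1 h2)"
proof (rule set_eqI)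
  fix s
  show "s \<in> dinterval X l1 h1 \<inter> dinterval X l2 h2 \<longleftrightarrow> s \<in> dinterval X (maxo l1 l2) (mino h1 h2)"
    unfolding dinterval_def mem_Collect_eq Int_iff maxo_iff mino_iff by blast
qed

lemma basis_Int:
  assumes "B1 \<in> basis_intervals I W" "B2 \<in> basis_intervals I W" "p \<in> B1 \<inter> B2"
  shows "B1 \<inter> B2 \<in> basis_intervals I W"
proof -
  obtain l1 h1 where 1: "\<forall>a. l1 = Some a \<longrightarrow> a \<in> divided_interval I W \<and> \<not> (fst a \<in> W \<and> snd a = -1)"
    "\<forall>b. h1 = Some b \<longrightarrow> b \<in> divided_interval I W \<and> \<not> (fst b \<in> W \<and> snd b = 1)"
    "B1 = dinterval (divided_interval I W) l1 h1"
    using assms(1) unfolding basis_intervals_def by blast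
  obtain l2 h2 where 2: "\<forall>a. l2 = Some a \<longrightarrow> a \<in> divided_interval I W \<and> \<not> (fst a \<in> W \<and> snd a = -1)"
    "\<forall>b. h2 = Some b \<longrightarrow> b \<in> divided_interval I W \<and> \<not> (fst b \<in> W \<and> snd b = 1)"
    "B2 = dinterval (divided_interval I W) l2 h2"
    using assms(2) unfolding basis_intervals_def by blast
  have eq: "B1 \<inter> B2 = dinterval (divided_interval I W) (maxo l1 l2) (mino h1 h2)"
    using dinterval_Int 1(3) 2(3) by simp
  have a: "\<forall>a. maxo l1 l2 = Some a \<longrightarrow> a \<in> divided_interval I W \<and> \<not> (fst a \<in> W \<and> snd a = -1)"
    using 1(1) 2(1) maxo_cases by blast
  have b: "\<forall>b. mino h1 h2 = Some b \<longrightarrow> b \<in> divided_interval I W \<and> \<not> (fst b \<in> W \<and> snd b = 1)"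
    using 1(2) 2(2) mino_cases by blast
  have ne: "B1 \<inter> B2 \<noteq> {}" using assms(3) by blast
  show ?thesis unfolding basis_intervals_def
    apply (rule CollectI)
    apply (rule exI[where x="maxo l1 l2"])
    apply (rule exI[where x="mino h1 h2"])
    by (intro conjI) (fact a, fact b, fact eq, fact ne)
qed

lemma basis_local:
  assumes "openin (divided_topology I W) U" "p \<in> U"
  shows "\<exists>B\<in>basis_intervals I W. p \<in> B \<and> B \<subseteq> U"
proof -
  have "generate_topology_on (basis_intervals I W) U"
    using assms(1) unfolding divided_topology_def openin_topology_generated_by_iff .
  then show ?thesis using assms(2)
  proof (induction arbitrary: p)
    case Empty then show ?case by (simp only: empty_iff)
  next
    case (Int a b)
    have "p \<in> a" "p \<in> b" using Int.prems by auto
    obtain B1 where B1: "B1 \<in> basis_intervals I W" "p \<in> B1" "B1 \<subseteq> a"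
      using Int.IH(1)[OF \<open>p \<in> a\<close>] by blast
    obtain B2 where B2: "B2 \<in> basis_intervals I W" "p \<in> B2" "B2 \<subseteq> b"
      using Int.IH(2)[OF \<open>p \<in> b\<close>] by blast
    have "B1 \<inter> B2 \<in> basis_intervals I W" using basis_Int[OF B1(1) B2(1)] B1(2) B2(2) by blast
    moreover have "p \<in> B1 \<inter> B2" "B1 \<inter> B2 \<subseteq> a \<inter> b" using B1 B2 by auto
    ultimately show ?case by blast
  next
    case (UN K)
    from UN.prems obtain k where k: "k \<in> K" "p \<in> k" by (rule UnionE)
    obtain B where "B \<in> basis_intervals I W" "p \<in> B" "B \<subseteq> k" using UN.IH[OF k] by blast
    then show ?case using k by blast
  next
    case (Basis s) then show ?case by (intro bexI[of _ s]) auto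
  qed
qed

lemma basis_open: "B \<in> basis_intervals I W \<Longrightarrow> openin (divided_topology I W) B"
  unfolding divided_topology_def openin_topology_generated_by_iff
  by (rule generate_topology_on.Basis)

lemma dinterval_open:
  assumes "\<forall>a. lo = Some a \<longrightarrow> a \<in> divided_interval I W \<and> \<not> (fst a \<in> W \<and> snd a = -1)"
    "\<forall>b. hi = Some b \<longrightarrow> b \<in> divided_interval I W \<and> \<not> (fst b \<in> W \<and> snd b = 1)"
  shows "openin (divided_topology I W) (dinterval (divided_interval I W) lo hi)"
proof (cases "dinterval (divided_interval I W) lo hi = {}")
  case True then show ?thesis by simp
next
  case False
  then have "dinterval (divided_interval I W) lo hi \<in> basis_intervals I W"
    using assms unfolding basis_intervals_def by blast
  then show ?thesis by (rule basis_open)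
qed

lemma mem_X: "(x, t) \<in> divided_interval I W \<longleftrightarrow> x \<in> I \<and> (if x \<in> W then t \<in> {-1,0,1} else t = 0)"
  unfolding divided_interval_def by simp

lemma nbhd_left:
  assumes "open I" "B \<in> basis_intervals I W" "(x, t) \<in> B" "t \<le> 0"
  shows "\<exists>d>0. \<forall>y. x - d < y \<and> y < x \<longrightarrow> (y, 0) \<in> B"
proof -
  obtain lo hi where 1: "\<forall>a. lo = Some a \<longrightarrow> a \<in> divided_interval I W \<and> \<not> (fst a \<in> W \<and> snd a = -1)"
    "\<forall>b. hi = Some b \<longrightarrow> b \<in> divided_interval I W \<and> \<not> (fst b \<in> W \<and> snd b = 1)"
    "B = dinterval (divided_interval I W) lo hi"
    using assms(2) unfolding basis_intervals_def by blast
  have xX: "(x,t) \<in> divided_interval I W" and lo: "\<forall>a. lo = Some a \<longrightarrow> dless a (x,t)"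
    and hi: "\<forall>b. hi = Some b \<longrightarrow> dless (x,t) b"
    using assms(3) 1(3) unfolding dinterval_def by auto
  have "x \<in> I" using xX mem_X by blast
  then obtain d0 where d0: "d0 > 0" "ball x d0 \<subseteq> I" using assms(1) open_contains_ball by blast
  have lolt: "fst a < x" if "lo = Some a" for a
  proof -
    obtain a1 a2 where a: "a = (a1,a2)" by force
    have "a \<in> divided_interval I W" "\<not> (fst a \<in> W \<and> snd a = -1)" using 1(1) that by auto
    moreover have "dless a (x,t)" using lo that by auto
    ultimately show ?thesis using assms(4) unfolding a dless_def mem_X
      by (auto split: if_splits)
  qed
  define d where "d = (case lo of None \<Rightarrow> d0 | Some a \<Rightarrow> min d0 (x - fst a))"
  have "d > 0" using d0 lolt unfolding d_def by (auto split: option.splits)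
  moreover have "(y, 0) \<in> B" if y: "x - d < y" "y < x" for y
  proof -
    have "d \<le> d0" unfolding d_def by (auto split: option.splits)
    then have "y \<in> I" using d0 y by (auto simp: dist_real_def subset_iff)
    then have yX: "(y,0) \<in> divided_interval I W" by (simp add: mem_X)
    have "dless a (y,0)" if "lo = Some a" for a
      using lolt[OF that] y that unfolding d_def dless_def by auto
    moreover have "dless (y,0) b" if "hi = Some b" for b
      using hi that y unfolding dless_def by force
    ultimately show ?thesis using yX 1(3) unfolding dinterval_def by auto
  qed
  ultimately show ?thesis by blast
qed

lemma nbhd_right:
  assumes "open I" "B \<in> basis_intervals I W" "(x, t) \<in> B" "t \<ge> 0"
  shows "\<exists>d>0. \<forall>y. x < y \<and> y < x + d \<longrightarrow> (y, 0) \<in> B"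
proof -
  obtain lo hi where 1: "\<forall>a. lo = Some a \<longrightarrow> a \<in> divided_interval I W \<and> \<not> (fst a \<in> W \<and> snd a = -1)"
    "\<forall>b. hi = Some b \<longrightarrow> b \<in> divided_interval I W \<and> \<not> (fst b \<in> W \<and> snd b = 1)"
    "B = dinterval (divided_interval I W) lo hi"
    using assms(2) unfolding basis_intervals_def by blast
  have xX: "(x,t) \<in> divided_interval I W" and lo: "\<forall>a. lo = Some a \<longrightarrow> dless a (x,t)"
    and hi: "\<forall>b. hi = Some b \<longrightarrow> dless (x,t) b"
    using assms(3) 1(3) unfolding dinterval_def by auto
  have "x \<in> I" using xX mem_X by blast
  then obtain d0 where d0: "d0 > 0" "ball x d0 \<subseteq> I" using assms(1) open_contains_ball by blast
  have higt: "x < fst a" if "hi = Some a" for a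
  proof -
    obtain a1 a2 where a: "a = (a1,a2)" by force
    have "a \<in> divided_interval I W" "\<not> (fst a \<in> W \<and> snd a = 1)" using 1(2) that by auto
    moreover have "dless (x,t) a" using hi that by auto
    ultimately show ?thesis using assms(4) unfolding a dless_def mem_X
      by (auto split: if_splits)
  qed
  define d where "d = (case hi of None \<Rightarrow> d0 | Some a \<Rightarrow> min d0 (fst a - x))"
  have "d > 0" using d0 higt unfolding d_def by (auto split: option.splits)
  moreover have "(y, 0) \<in> B" if y: "x < y" "y < x + d" for y
  proof -
    have "d \<le> d0" unfolding d_def by (auto split: option.splits)
    then have "y \<in> I" using d0 y by (auto simp: dist_real_def subset_iff)
    then have yX: "(y,0) \<in> divided_interval I W" by (simp add: mem_X)
    have "dless (y,0) a" if "hi = Some a" for a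
      using higt[OF that] y that unfolding d_def dless_def by auto
    moreover have "dless b (y,0)" if "lo = Some b" for b
      using lo that y unfolding dless_def by force
    ultimately show ?thesis using yX 1(3) unfolding dinterval_def by auto
  qed
  ultimately show ?thesis by blast
qed


lemma some_zero_point:
  assumes "open I" "B \<in> basis_intervals I W" "p \<in> B"
  shows "\<exists>y. (y, 0) \<in> B"
proof -
  obtain x t where p: "p = (x,t)" by force
  have xt: "(x,t) \<in> B" using assms(3) p by simp
  show ?thesis
  proof (cases "t \<le> 0")
    case True
    from nbhd_left[OF assms(1,2) xt True] obtain d where "d>0" and d: "\<forall>y. x-d<y \<and> y<x \<longrightarrow> (y,0)\<in>B"
      by blast
    have "(x - d/2, 0) \<in> B" by (rule d[rule_format]) (use \<open>d>0\<close> in simp)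
    then show ?thesis ..
  next
    case False
    then have t0: "0 \<le> t" by simp
    from nbhd_right[OF assms(1,2) xt t0] obtain d where "d>0" and d: "\<forall>y. x<y \<and> y<x+d \<longrightarrow> (y,0)\<in>B"
      by blast
    have "(x + d/2, 0) \<in> B" by (rule d[rule_format]) (use \<open>d>0\<close> in simp)
    then show ?thesis ..
  qed
qed

lemma conn:
  assumes oI: "open I" and iI: "is_interval I" and JX: "J \<subseteq> divided_interval I W"
    and cv: "\<And>p q r. p\<in>J \<Longrightarrow> q\<in>J \<Longrightarrow> r \<in> divided_interval I W \<Longrightarrow> dless p r \<Longrightarrow> dless r q \<Longrightarrow> r\<in>J"
    and f: "f \<in> loc_const_sections (divided_topology I W) J"
    and yz: "y \<in> J" "z \<in> J"
  shows "f y = f z"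
proof -
  have nb: "\<exists>B\<in>basis_intervals I W. p\<in>B \<and> B \<subseteq> J \<and> (\<forall>q\<in>B. f q = f p)" if "p\<in>J" for p
  proof -
    from f that obtain N where N: "openin (divided_topology I W) N" "p\<in>N" "N\<subseteq>J" "\<forall>q\<in>N. f q = f p"
      unfolding loc_const_sections_def by blast
    from basis_local[OF N(1) N(2)] obtain B where "B \<in> basis_intervals I W" "p \<in> B" "B \<subseteq> N"
      by blast
    then show ?thesis using N by blast
  qed
  define D where "D = {x. (x,0) \<in> J}"
  have ex: "\<exists>x\<in>D. f p = f (x,0)" if "p \<in> J" for p
  proof -
    obtain B where B: "B\<in>basis_intervals I W" "p\<in>B" "B\<subseteq>J" "\<forall>q\<in>B. f q = f p"
      using nb[OF \<open>p \<in> J\<close>] by blast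
    obtain y where y: "(y,0)\<in>B" using some_zero_point[OF oI B(1,2)] by blast
    have "f (y,0) = f p" using B(4) y by blast
    moreover have "y \<in> D" using B(3) y unfolding D_def by blast
    ultimately show ?thesis by metis
  qed
  have Dint: "is_interval D"
    unfolding is_interval_1
  proof (intro ballI allI impI)
    fix a b x assume a: "a\<in>D" and b: "b\<in>D" and x: "a \<le> x \<and> x \<le> b"
    show "x \<in> D"
    proof (cases "x = a \<or> x = b")
      case True then show ?thesis using a b by blast
    next
      case False
      have aJ: "(a,0) \<in> J" and bJ: "(b,0) \<in> J" using a b unfolding D_def by simp_all
      then have "(a,0) \<in> divided_interval I W" "(b,0) \<in> divided_interval I W" using JX by (simp_all add: subset_iff)
      then have "a \<in> I" "b \<in> I" by (simp_all add: mem_X)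
      then have "x \<in> I" using mem_is_interval_1_I[OF iI] x by blast
      then have xX: "(x,0) \<in> divided_interval I W" by (simp add: mem_X)
      have l1: "dless (a,0) (x,0)" and l2: "dless (x,0) (b,0)" using x False unfolding dless_def by auto
      have "(x,0) \<in> J" by (rule cv[OF aJ bJ xX l1 l2])
      then show ?thesis unfolding D_def by simp
    qed
  qed
  have lc: "\<forall>x\<in>D. eventually (\<lambda>y. f (x,0) = f (y,0)) (at x within D)"
  proof
    fix x assume "x \<in> D"
    then obtain B where B: "B\<in>basis_intervals I W" "(x,0)\<in>B" "B\<subseteq>J" "\<forall>q\<in>B. f q = f (x,0)"
      using nb unfolding D_def by blast
    obtain d1 where d1: "d1>0" "\<forall>y. x-d1<y \<and> y<x \<longrightarrow> (y,0)\<in>B"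
      using nbhd_left[OF oI B(1,2)] by auto
    obtain d2 where d2: "d2>0" "\<forall>y. x<y \<and> y<x+d2 \<longrightarrow> (y,0)\<in>B"
      using nbhd_right[OF oI B(1,2)] by auto
    show "eventually (\<lambda>y. f (x,0) = f (y,0)) (at x within D)"
      unfolding eventually_at
    proof (intro exI[of _ "min d1 d2"] conjI ballI impI)
      show "min d1 d2 > 0" using d1 d2 by simp
      fix y assume "y \<in> D" "y \<noteq> x \<and> dist y x < min d1 d2"
      then have yy: "y \<noteq> x" "\<bar>y - x\<bar> < d1" "\<bar>y - x\<bar> < d2" by (auto simp: dist_real_def)
      have "(y,0) \<in> B"
      proof (cases "y < x")
        case True then show ?thesis using d1(2) yy by auto
      next
        case False then show ?thesis using d2(2) yy by auto
      qed
      then show "f (x,0) = f (y,0)" using B(4) by simp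
    qed
  qed
  obtain x1 where x1: "x1\<in>D" "f y = f (x1,0)" using ex yz(1) by blast
  obtain x2 where x2: "x2\<in>D" "f z = f (x2,0)" using ex yz(2) by blast
  have "connected D" using Dint is_interval_connected_1 by blast
  have "f (x1,0) = f (x2,0)"
    by (rule connected_local_const[OF \<open>connected D\<close> x1(1) x2(1) lc])
  then show ?thesis using x1 x2 by simp
qed


lemma dinterval_convex:
  assumes "p \<in> dinterval X lo hi" "q \<in> dinterval X lo hi" "r \<in> X" "dless p r" "dless r q"
  shows "r \<in> dinterval X lo hi"
  using assms unfolding dinterval_def by (blast intro: dless_trans)

lemma basis_dinterval:
  assumes "B \<in> basis_intervals I W"
  obtains lo hi where "B = dinterval (divided_interval I W) lo hi"
  using assms unfolding basis_intervals_def by blast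

lemma dinterval_sub: "dinterval X lo hi \<subseteq> X"
  unfolding dinterval_def by blast

lemma E_right:
  assumes oI: "open I" and iI: "is_interval I" and eX: "(w,1) \<in> divided_interval I W"
    and N: "openin (divided_topology I W) N" "(w,1) \<in> N"
  shows "\<exists>Q. openin (divided_topology I W) Q \<and> (w,1) \<in> Q \<and> Q \<subseteq> N \<and>
        openin (divided_topology I W) (Q - {(w,1)}) \<and> Q - {(w,1)} \<noteq> {} \<and>
        (\<forall>f\<in>(loc_const_sections (divided_topology I W) (Q - {(w,1)}) :: ((real \<times> int) \<Rightarrow> 'w::zero) set).
            \<forall>y\<in>Q-{(w,1)}. \<forall>z\<in>Q-{(w,1)}. f y = f z)"
proof -
  define X where "X = divided_interval I W"
  define T where "T = divided_topology I W"
  have wI: "w \<in> I" and wW: "w \<in> W" using eX unfolding mem_X by (auto split: if_splits)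
  have w0X: "(w,0) \<in> X" using wI wW unfolding X_def mem_X by simp
  obtain B where B: "B \<in> basis_intervals I W" "(w,1) \<in> B" "B \<subseteq> N"
    using basis_local[OF N] by blast
  obtain lo hi where Bd: "B = dinterval X lo hi" using basis_dinterval[OF B(1)] unfolding X_def by blast
  define Q where "Q = B \<inter> dinterval X (Some (w,0)) None"
  define Q' where "Q' = B \<inter> dinterval X (Some (w,1)) None"
  have QQ': "Q - {(w,1)} = Q'"
  proof (rule set_eqI)
    fix s :: "real \<times> int"
    obtain a b where s: "s = (a,b)" by force
    show "s \<in> Q - {(w,1)} \<longleftrightarrow> s \<in> Q'"
    proof (cases "s \<in> X")
      case True
      then have "b \<in> {-1,0,1}" unfolding s X_def mem_X by (auto split: if_splits)
      then show ?thesis unfolding Q_def Q'_def dinterval_def s dless_def by auto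
    next
      case False
      then show ?thesis unfolding Q_def Q'_def dinterval_def by auto
    qed
  qed
  have o1: "openin T (dinterval X (Some (w,0)) None)"
    unfolding T_def X_def by (rule dinterval_open) (use w0X X_def in auto)
  have o2: "openin T (dinterval X (Some (w,1)) None)"
    unfolding T_def X_def by (rule dinterval_open) (use eX in auto)
  have oB: "openin T B" unfolding T_def by (rule basis_open[OF B(1)])
  have oQ: "openin T Q" unfolding Q_def using oB o1 by blast
  have oQ': "openin T Q'" unfolding Q'_def using oB o2 by blast
  have eQ: "(w,1) \<in> Q" unfolding Q_def dinterval_def using B(2) eX unfolding X_def dless_def by auto
  have QN: "Q \<subseteq> N" unfolding Q_def using B(3) by blast
  obtain d where "d>0" and d: "\<forall>y. w<y \<and> y<w+d \<longrightarrow> (y,0)\<in>B"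
    using nbhd_right[OF oI B(1) B(2)] by auto
  have yB: "(w + d/2, 0) \<in> B" by (rule d[rule_format]) (use \<open>d>0\<close> in simp)
  then have "(w + d/2, 0) \<in> Q'" unfolding Q'_def dinterval_def using \<open>d>0\<close> Bd dinterval_sub
    by (auto simp: dless_def)
  then have Q'ne: "Q' \<noteq> {}" by blast
  have const: "f y = f z" if f: "f \<in> loc_const_sections T Q'" and yz: "y \<in> Q'" "z \<in> Q'"
    for f :: "(real \<times> int) \<Rightarrow> 'w" and y z
  proof (rule conn[OF oI iI _ _ f[unfolded T_def] yz])
    show "Q' \<subseteq> divided_interval I W" unfolding Q'_def using dinterval_sub X_def by blast
  next
    fix p q r assume p: "p \<in> Q'" and q: "q \<in> Q'" and r: "r \<in> divided_interval I W"
      and pr: "dless p r" and rq: "dless r q"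
    have "r \<in> B" using dinterval_convex[of p X lo hi q r] p q r pr rq Bd unfolding Q'_def X_def by blast
    moreover have "r \<in> dinterval X (Some (w,1)) None"
      using dinterval_convex[of p X "Some (w,1)" None q r] p q r pr rq unfolding Q'_def X_def by blast
    ultimately show "r \<in> Q'" unfolding Q'_def by blast
  qed
  show ?thesis
    unfolding T_def[symmetric] QQ'[symmetric]
    apply (rule exI[of _ Q])
    using oQ eQ QN oQ' Q'ne const QQ' by auto
qed

lemma E_left:
  assumes oI: "open I" and iI: "is_interval I" and eX: "(w,-1) \<in> divided_interval I W"
    and N: "openin (divided_topology I W) N" "(w,-1) \<in> N"
  shows "\<exists>Q. openin (divided_topology I W) Q \<and> (w,-1) \<in> Q \<and> Q \<subseteq> N \<and>
        openin (divided_topology I W) (Q - {(w,-1)}) \<and> Q - {(w,-1)} \<noteq> {} \<and>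
        (\<forall>f\<in>(loc_const_sections (divided_topology I W) (Q - {(w,-1)}) :: ((real \<times> int) \<Rightarrow> 'w::zero) set).
            \<forall>y\<in>Q-{(w,-1)}. \<forall>z\<in>Q-{(w,-1)}. f y = f z)"
proof -
  define X where "X = divided_interval I W"
  define T where "T = divided_topology I W"
  have wI: "w \<in> I" and wW: "w \<in> W" using eX unfolding mem_X by (auto split: if_splits)
  have w0X: "(w,0) \<in> X" using wI wW unfolding X_def mem_X by simp
  obtain B where B: "B \<in> basis_intervals I W" "(w,-1) \<in> B" "B \<subseteq> N"
    using basis_local[OF N] by blast
  obtain lo hi where Bd: "B = dinterval X lo hi" using basis_dinterval[OF B(1)] unfolding X_def by blast
  define Q where "Q = B \<inter> dinterval X None (Some (w,0))"
  define Q' where "Q' = B \<inter> dinterval X None (Some (w,-1))"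
  have QQ': "Q - {(w,-1)} = Q'"
  proof (rule set_eqI)
    fix s :: "real \<times> int"
    obtain a b where s: "s = (a,b)" by force
    show "s \<in> Q - {(w,-1)} \<longleftrightarrow> s \<in> Q'"
    proof (cases "s \<in> X")
      case True
      then have "b \<in> {-1,0,1}" unfolding s X_def mem_X by (auto split: if_splits)
      then show ?thesis unfolding Q_def Q'_def dinterval_def s dless_def by auto
    next
      case False
      then show ?thesis unfolding Q_def Q'_def dinterval_def by auto
    qed
  qed
  have o1: "openin T (dinterval X None (Some (w,0)))"
    unfolding T_def X_def by (rule dinterval_open) (use w0X X_def in auto)
  have o2: "openin T (dinterval X None (Some (w,-1)))"
    unfolding T_def X_def by (rule dinterval_open) (use eX in auto)
  have oB: "openin T B" unfolding T_def by (rule basis_open[OF B(1)])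
  have oQ: "openin T Q" unfolding Q_def using oB o1 by blast
  have oQ': "openin T Q'" unfolding Q'_def using oB o2 by blast
  have eQ: "(w,-1) \<in> Q" unfolding Q_def dinterval_def using B(2) eX unfolding X_def dless_def by auto
  have QN: "Q \<subseteq> N" unfolding Q_def using B(3) by blast
  obtain d where "d>0" and d: "\<forall>y. w-d<y \<and> y<w \<longrightarrow> (y,0)\<in>B"
    using nbhd_left[OF oI B(1) B(2)] by auto
  have yB: "(w - d/2, 0) \<in> B" by (rule d[rule_format]) (use \<open>d>0\<close> in simp)
  then have "(w - d/2, 0) \<in> Q'" unfolding Q'_def dinterval_def using \<open>d>0\<close> Bd dinterval_sub
    by (auto simp: dless_def)
  then have Q'ne: "Q' \<noteq> {}" by blast
  have const: "f y = f z" if f: "f \<in> loc_const_sections T Q'" and yz: "y \<in> Q'" "z \<in> Q'"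
    for f :: "(real \<times> int) \<Rightarrow> 'w" and y z
  proof (rule conn[OF oI iI _ _ f[unfolded T_def] yz])
    show "Q' \<subseteq> divided_interval I W" unfolding Q'_def using dinterval_sub X_def by blast
  next
    fix p q r assume p: "p \<in> Q'" and q: "q \<in> Q'" and r: "r \<in> divided_interval I W"
      and pr: "dless p r" and rq: "dless r q"
    have "r \<in> B" using dinterval_convex[of p X lo hi q r] p q r pr rq Bd unfolding Q'_def X_def by blast
    moreover have "r \<in> dinterval X None (Some (w,-1))"
      using dinterval_convex[of p X None "Some (w,-1)" q r] p q r pr rq unfolding Q'_def X_def by blast
    ultimately show "r \<in> Q'" unfolding Q'_def by blast
  qed
  show ?thesis
    unfolding T_def[symmetric] QQ'[symmetric]
    apply (rule exI[of _ Q])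
    using oQ eQ QN oQ' Q'ne const QQ' by auto
qed

lemma remove_point:
  fixes T :: "'a topology" and sc :: "'k::field \<Rightarrow> 'v::ab_group_add \<Rightarrow> 'v"
    and scW :: "'k \<Rightarrow> 'w::ab_group_add \<Rightarrow> 'w"
    and F :: "'a set \<Rightarrow> 'v set" and res :: "'a set \<Rightarrow> 'a set \<Rightarrow> 'v \<Rightarrow> 'v"
  assumes LS: "local_system T sc scW F res"
    and Hop: "openin T H" and Heop: "openin T (H - {e})" and eH: "e \<in> H"
    and E: "\<And>N. openin T N \<Longrightarrow> e \<in> N \<Longrightarrow> \<exists>Q. openin T Q \<and> e \<in> Q \<and> Q \<subseteq> N \<and>
        openin T (Q - {e}) \<and> Q - {e} \<noteq> {} \<and>
        (\<forall>f\<in>(loc_const_sections T (Q - {e}) :: ('a \<Rightarrow> 'w) set). \<forall>y\<in>Q-{e}. \<forall>z\<in>Q-{e}. f y = f z)"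
  shows "bij_betw (res H (H - {e})) (F H) (F (H - {e}))"
proof -
  have S: "vs_sheaf T sc F res" using LS unfolding local_system_def by (rule conjunct1)
  note S' = S[unfolded vs_sheaf_def]
  have smap: "res U V ` F U \<subseteq> F V" if "openin T U" "openin T V" "V \<subseteq> U" for U V
  proof -
    have "linear_on sc sc (F U) (res U V) \<and> res U V ` F U \<subseteq> F V"
      using S'[THEN conjunct2, THEN conjunct2, THEN conjunct1, rule_format, of U V] that by blast
    then show ?thesis by (rule conjunct2)
  qed
  have scomp: "res V W (res U V s) = res U W s"
    if "openin T U" "openin T V" "openin T W" "W \<subseteq> V" "V \<subseteq> U" "s \<in> F U" for U V W s
    using S'[THEN conjunct2, THEN conjunct2, THEN conjunct2, THEN conjunct2, THEN conjunct1, rule_format, of U V W s] that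
    by blast
  have sloc: "s = t" if "openin T U" "\<forall>V\<in>\<U>. openin T V" "\<Union>\<U> = U"
      "s\<in>F U" "t\<in>F U" "\<forall>V\<in>\<U>. res U V s = res U V t" for U \<U> s t
    using S'[THEN conjunct2, THEN conjunct2, THEN conjunct2, THEN conjunct2, THEN conjunct2, THEN conjunct1, rule_format, of U \<U> s t] that
    by blast
  have sglue: "\<exists>s\<in>F U. \<forall>V\<in>\<U>. res U V s = g V" if "openin T U" "\<forall>V\<in>\<U>. openin T V" "\<Union>\<U> = U"
        "\<forall>V\<in>\<U>. g V \<in> F V"
        "\<forall>V\<in>\<U>. \<forall>V'\<in>\<U>. res V (V \<inter> V') (g V) = res V' (V \<inter> V') (g V')" for U \<U> g
    using S'[THEN conjunct2, THEN conjunct2, THEN conjunct2, THEN conjunct2, THEN conjunct2, THEN conjunct2, rule_format, of U \<U> g] that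
    by blast
  have etop: "e \<in> topspace T" using openin_subset[OF Hop] eH by blast
  obtain U \<phi> where U: "openin T U" "e \<in> U" and
    phi: "\<forall>Q. openin T Q \<and> Q \<subseteq> U \<longrightarrow>
           bij_betw (\<phi> Q) (F Q) (loc_const_sections T Q) \<and>
           (\<forall>s\<in>F Q. \<forall>t\<in>F Q. \<forall>y. \<phi> Q (s + t) y = \<phi> Q s y + \<phi> Q t y) \<and>
           (\<forall>c. \<forall>s\<in>F Q. \<forall>y. \<phi> Q (sc c s) y = scW c (\<phi> Q s y)) \<and>
           (\<forall>Q'. openin T Q' \<and> Q' \<subseteq> Q \<longrightarrow>
              (\<forall>s\<in>F Q. \<forall>y\<in>Q'. \<phi> Q' (res Q Q' s) y = \<phi> Q s y))"
    using bspec[OF LS[unfolded local_system_def, THEN conjunct2] etop]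
    apply (elim exE conjE)
    apply (rule that)
    by assumption+
  have phiB: "bij_betw (\<phi> Q) (F Q) (loc_const_sections T Q)" if "openin T Q" "Q \<subseteq> U" for Q
    using phi[rule_format, OF conjI[OF that]] by (rule conjunct1)
  have phiR: "\<phi> Q' (res Q Q' s) y = \<phi> Q s y"
    if "openin T Q" "Q \<subseteq> U" "openin T Q'" "Q' \<subseteq> Q" "s \<in> F Q" "y \<in> Q'" for Q Q' s y
  proof -
    have "\<forall>Q'. openin T Q' \<and> Q' \<subseteq> Q \<longrightarrow> (\<forall>s\<in>F Q. \<forall>y\<in>Q'. \<phi> Q' (res Q Q' s) y = \<phi> Q s y)"
      using phi[rule_format, OF conjI[OF that(1,2)]] by (elim conjE)
    then show ?thesis using that by blast
  qed
  have zero: "g y = 0" if "g \<in> loc_const_sections T Q" "y \<notin> Q" for g :: "'a \<Rightarrow> 'w" and Q y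
    using that unfolding loc_const_sections_def by blast
  have UHop: "openin T (U \<inter> H)" using U(1) Hop by blast
  obtain Q where Qop: "openin T Q" and eQ: "e \<in> Q" and QUH: "Q \<subseteq> U \<inter> H"
    and Q'op: "openin T (Q - {e})" and Q'ne: "Q - {e} \<noteq> {}"
    and Qc: "\<forall>f\<in>(loc_const_sections T (Q - {e}) :: ('a \<Rightarrow> 'w) set). \<forall>y\<in>Q-{e}. \<forall>z\<in>Q-{e}. f y = f z"
    using E[OF UHop] U(2) eH by blast
  define Q' where "Q' = Q - {e}"
  have QU: "Q \<subseteq> U" and QH: "Q \<subseteq> H" using QUH by auto
  have Q'Q: "Q' \<subseteq> Q" and Q'He: "Q' \<subseteq> H - {e}" and Q'U: "Q' \<subseteq> U" using QH QU unfolding Q'_def by auto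
  have Q'op2: "openin T Q'" using Q'op unfolding Q'_def .
  have cover: "\<Union>{Q, H - {e}} = H" using QH eQ by blast
  have coverop: "\<forall>V\<in>{Q, H - {e}}. openin T V" using Qop Heop by blast
  have QneHe: "Q \<noteq> H - {e}" using eQ by blast
  have inter: "Q \<inter> (H - {e}) = Q'" using QH unfolding Q'_def by blast
  have inter2: "(H - {e}) \<inter> Q = Q'" using QH unfolding Q'_def by blast

  have inj: "inj_on (res H (H - {e})) (F H)"
  proof (rule inj_onI)
    fix s t assume s: "s \<in> F H" and t: "t \<in> F H" and eq: "res H (H - {e}) s = res H (H - {e}) t"
    have rs: "res H Q s \<in> F Q" and rt: "res H Q t \<in> F Q" using smap[OF Hop Qop QH] s t by blast+
    have eqQ': "res H Q' s = res H Q' t"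
    proof -
      have "res H Q' s = res (H - {e}) Q' (res H (H - {e}) s)"
        using scomp[OF Hop Heop Q'op2 Q'He _ s] by auto
      also have "\<dots> = res (H - {e}) Q' (res H (H - {e}) t)" using eq by simp
      also have "\<dots> = res H Q' t"
        using scomp[OF Hop Heop Q'op2 Q'He _ t] by auto
      finally show ?thesis .
    qed
    have onQ': "\<phi> Q (res H Q s) y = \<phi> Q (res H Q t) y" if "y \<in> Q'" for y
    proof -
      have "\<phi> Q (res H Q s) y = \<phi> Q' (res Q Q' (res H Q s)) y"
        using phiR[OF Qop QU Q'op2 Q'Q rs that] by simp
      also have "\<dots> = \<phi> Q' (res H Q' s) y" using scomp[OF Hop Qop Q'op2 Q'Q QH s] by simp
      also have "\<dots> = \<phi> Q' (res H Q' t) y" using eqQ' by simp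
      also have "\<dots> = \<phi> Q' (res Q Q' (res H Q t)) y" using scomp[OF Hop Qop Q'op2 Q'Q QH t] by simp
      also have "\<dots> = \<phi> Q (res H Q t) y"
        using phiR[OF Qop QU Q'op2 Q'Q rt that] by simp
      finally show ?thesis .
    qed
    have gs: "\<phi> Q (res H Q s) \<in> loc_const_sections T Q" and gt: "\<phi> Q (res H Q t) \<in> loc_const_sections T Q"
      using phiB[OF Qop QU] rs rt unfolding bij_betw_def by blast+
    have "\<phi> Q (res H Q s) = \<phi> Q (res H Q t)"
    proof
      fix y
      show "\<phi> Q (res H Q s) y = \<phi> Q (res H Q t) y"
      proof (cases "y \<in> Q")
        case False
        then show ?thesis using zero[OF gs False] zero[OF gt False] by simp
      next
        case True
        show ?thesis
        proof (cases "y = e")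
          case False
          then show ?thesis using onQ' True unfolding Q'_def by blast
        next
          case ye: True
          obtain N1 where N1: "openin T N1" "e \<in> N1" "N1 \<subseteq> Q" "\<forall>z\<in>N1. \<phi> Q (res H Q s) z = \<phi> Q (res H Q s) e"
            using gs eQ unfolding loc_const_sections_def by blast
          obtain N2 where N2: "openin T N2" "e \<in> N2" "N2 \<subseteq> Q" "\<forall>z\<in>N2. \<phi> Q (res H Q t) z = \<phi> Q (res H Q t) e"
            using gt eQ unfolding loc_const_sections_def by blast
          have N12: "openin T (N1 \<inter> N2)" using N1(1) N2(1) by blast
          obtain Q3 where "Q3 \<subseteq> N1 \<inter> N2" "Q3 - {e} \<noteq> {}"
            using E[OF N12] N1(2) N2(2) by blast
          then obtain z where z: "z \<in> N1" "z \<in> N2" "z \<noteq> e" by blast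
          then have "z \<in> Q'" using N1(3) unfolding Q'_def by blast
          then show ?thesis using onQ' N1(4) N2(4) z ye by metis
        qed
      qed
    qed
    then have "res H Q s = res H Q t"
      using phiB[OF Qop QU] rs rt unfolding bij_betw_def inj_on_def by blast
    then have "\<forall>V\<in>{Q, H - {e}}. res H V s = res H V t" using eq by blast
    then show "s = t" using sloc[OF Hop coverop cover s t] by blast
  qed

  have surj: "F (H - {e}) \<subseteq> res H (H - {e}) ` F H"
  proof
    fix u assume u: "u \<in> F (H - {e})"
    define v where "v = res (H - {e}) Q' u"
    have v: "v \<in> F Q'" using smap[OF Heop Q'op2 Q'He] u unfolding v_def by blast
    define f where "f = \<phi> Q' v"
    have f: "f \<in> loc_const_sections T Q'"
      using phiB[OF Q'op2 Q'U] v unfolding f_def bij_betw_def by blast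
    obtain z0 where z0: "z0 \<in> Q'" using Q'ne unfolding Q'_def by blast
    define g :: "'a \<Rightarrow> 'w" where "g = (\<lambda>y. if y \<in> Q then f z0 else 0)"
    have g: "g \<in> loc_const_sections T Q"
      unfolding loc_const_sections_def g_def using Qop by auto
    obtain s0 where s0: "s0 \<in> F Q" "\<phi> Q s0 = g"
      using phiB[OF Qop QU] g unfolding bij_betw_def by (metis imageE)
    have rs0: "res Q Q' s0 \<in> F Q'" using smap[OF Qop Q'op2 Q'Q] s0(1) by blast
    have fr: "\<phi> Q' (res Q Q' s0) \<in> loc_const_sections T Q'"
      using phiB[OF Q'op2 Q'U] rs0 unfolding bij_betw_def by blast
    have "\<phi> Q' (res Q Q' s0) = \<phi> Q' v"
    proof
      fix y
      show "\<phi> Q' (res Q Q' s0) y = \<phi> Q' v y"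
      proof (cases "y \<in> Q'")
        case True
        have "\<phi> Q' (res Q Q' s0) y = \<phi> Q s0 y" using phiR[OF Qop QU Q'op2 Q'Q s0(1) True] .
        also have "\<dots> = f z0" using s0(2) True Q'Q unfolding g_def by auto
        also have "\<dots> = f y" using Qc f z0 True unfolding Q'_def by blast
        finally show ?thesis unfolding f_def .
      next
        case False
        then show ?thesis using zero[OF fr False] zero[OF f False] unfolding f_def by simp
      qed
    qed
    then have rv: "res Q Q' s0 = v"
      using phiB[OF Q'op2 Q'U] rs0 v unfolding bij_betw_def inj_on_def by blast
    define gg where "gg = (\<lambda>V. if V = Q then s0 else u)"
    have gg1: "\<forall>V\<in>{Q, H - {e}}. gg V \<in> F V" using s0(1) u QneHe unfolding gg_def by auto
    have gg2: "\<forall>V\<in>{Q, H - {e}}. \<forall>V'\<in>{Q, H - {e}}. res V (V \<inter> V') (gg V) = res V' (V \<inter> V') (gg V')"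
    proof (intro ballI)
      fix V V' assume V: "V \<in> {Q, H - {e}}" and V': "V' \<in> {Q, H - {e}}"
      have key: "res Q Q' s0 = res (H - {e}) Q' u" using rv unfolding v_def .
      show "res V (V \<inter> V') (gg V) = res V' (V \<inter> V') (gg V')"
      proof (cases "V = V'")
        case True then show ?thesis by simp
      next
        case False
        then have "(V = Q \<and> V' = H - {e}) \<or> (V = H - {e} \<and> V' = Q)" using V V' by blast
        then show ?thesis
        proof
          assume "V = Q \<and> V' = H - {e}"
          then show ?thesis using key inter QneHe unfolding gg_def by simp
        next
          assume "V = H - {e} \<and> V' = Q"
          then show ?thesis using key inter2 QneHe unfolding gg_def by simp
        qed
      qed
    qed
    obtain s where s: "s \<in> F H" "\<forall>V\<in>{Q, H - {e}}. res H V s = gg V"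
      using sglue[OF Hop coverop cover gg1 gg2] by blast
    have "res H (H - {e}) s = u" using s(2) QneHe unfolding gg_def by auto
    then show "u \<in> res H (H - {e}) ` F H" using s(1) by blast
  qed
  have "res H (H - {e}) ` F H \<subseteq> F (H - {e})" using smap[OF Hop Heop] by blast
  then show ?thesis unfolding bij_betw_def using inj surj by blast
qed


lemma sheaf_id_bij:
  assumes "vs_sheaf T sc F res" "openin T U"
  shows "bij_betw (res U U) (F U) (F U)"
proof -
  have "\<forall>s\<in>F U. res U U s = s"
    using assms(1)[unfolded vs_sheaf_def, THEN conjunct2, THEN conjunct2, THEN conjunct2, THEN conjunct1, rule_format, OF assms(2)] by blast
  then have "bij_betw (res U U) (F U) (F U) = bij_betw id (F U) (F U)"
    by (intro bij_betw_cong) simp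
  then show ?thesis by simp
qed

lemma sheaf_comp:
  assumes "vs_sheaf T sc F res" "openin T U" "openin T V" "openin T W" "W \<subseteq> V" "V \<subseteq> U" "s \<in> F U"
  shows "res V W (res U V s) = res U W s"
  using assms(1)[unfolded vs_sheaf_def, THEN conjunct2, THEN conjunct2, THEN conjunct2, THEN conjunct2, THEN conjunct1, rule_format, of U V W s] assms(2-)
  by blast

lemma least_snd:
  assumes oI: "open I" and H: "H \<in> basis_intervals I W" and eH: "e \<in> H"
    and least: "\<forall>s\<in>H. s \<noteq> e \<longrightarrow> dless e s"
  shows "snd e = 1"
proof -
  obtain x t where e: "e = (x,t)" by force
  obtain lo hi where Hd: "H = dinterval (divided_interval I W) lo hi" using basis_dinterval[OF H] by blast
  have eX: "(x,t) \<in> divided_interval I W" using eH e Hd dinterval_sub by blast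
  have "\<not> t \<le> 0"
  proof
    assume t: "t \<le> 0"
    from nbhd_left[OF oI H eH[unfolded e] t] obtain d where "d>0" and d: "\<forall>y. x-d<y \<and> y<x \<longrightarrow> (y,0)\<in>H"
      by blast
    have yH: "(x - d/2, 0) \<in> H" by (rule d[rule_format]) (use \<open>d>0\<close> in simp)
    have "(x - d/2, 0) \<noteq> e" using \<open>d>0\<close> e by simp
    then have "dless e (x - d/2, 0)" using least yH by blast
    then show False using \<open>d>0\<close> e unfolding dless_def by simp
  qed
  then show ?thesis using eX e unfolding mem_X by (auto split: if_splits)
qed

lemma greatest_snd:
  assumes oI: "open I" and H: "H \<in> basis_intervals I W" and eH: "e \<in> H"
    and greatest: "\<forall>s\<in>H. s \<noteq> e \<longrightarrow> dless s e"
  shows "snd e = -1"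
proof -
  obtain x t where e: "e = (x,t)" by force
  obtain lo hi where Hd: "H = dinterval (divided_interval I W) lo hi" using basis_dinterval[OF H] by blast
  have eX: "(x,t) \<in> divided_interval I W" using eH e Hd dinterval_sub by blast
  have "\<not> t \<ge> 0"
  proof
    assume t: "t \<ge> 0"
    from nbhd_right[OF oI H eH[unfolded e] t] obtain d where "d>0" and d: "\<forall>y. x<y \<and> y<x+d \<longrightarrow> (y,0)\<in>H"
      by blast
    have yH: "(x + d/2, 0) \<in> H" by (rule d[rule_format]) (use \<open>d>0\<close> in simp)
    have "(x + d/2, 0) \<noteq> e" using \<open>d>0\<close> e by simp
    then have "dless (x + d/2, 0) e" using greatest yH by blast
    then show False using \<open>d>0\<close> e unfolding dless_def by simp
  qed
  then show ?thesis using eX e unfolding mem_X by (auto split: if_splits)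
qed

theorem lemma3p4:
  fixes I W :: "real set"
    and sc :: "'k::field \<Rightarrow> 'v::ab_group_add \<Rightarrow> 'v"
    and scW :: "'k \<Rightarrow> 'w::ab_group_add \<Rightarrow> 'w"
    and F :: "(real \<times> int) set \<Rightarrow> 'v set"
    and res :: "(real \<times> int) set \<Rightarrow> (real \<times> int) set \<Rightarrow> 'v \<Rightarrow> 'v"
    and H :: "(real \<times> int) set"
  assumes "open I" and "is_interval I"
    and "W \<subseteq> I" and "countable W"
    and "\<exists>B. finite_dimensional_vector_space scW B"
    and "local_system (divided_topology I W) sc scW F res"
    and "H \<in> basis_intervals I W"
  shows "bij_betw (res H (trim H)) (F H) (F (trim H))"
proof -
  note oI = assms(1) and iI = assms(2) and LS = assms(6) and Hb = assms(7)
  define X where "X = divided_interval I W"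
  define T where "T = divided_topology I W"
  have S: "vs_sheaf T sc F res" using LS unfolding local_system_def T_def by (rule conjunct1)
  have LS': "local_system T sc scW F res" using LS unfolding T_def .
  have Hop: "openin T H" unfolding T_def by (rule basis_open[OF Hb])
  obtain lo hi where Hd: "H = dinterval X lo hi" using basis_dinterval[OF Hb] unfolding X_def by blast
  have HX: "H \<subseteq> X" using Hd dinterval_sub by blast
  define L where "L = {s \<in> H. \<forall>t \<in> H. t \<noteq> s \<longrightarrow> dless s t}"
  define G where "G = {s \<in> H. \<forall>t \<in> H. t \<noteq> s \<longrightarrow> dless t s}"
  have trimeq: "trim H = H - L - G" unfolding trim_def L_def G_def ..
  define H1 where "H1 = H - L"
  have step1: "openin T H1 \<and> bij_betw (res H H1) (F H) (F H1)"
  proof (cases "L = {}")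
    case True
    then have "H1 = H" unfolding H1_def by simp
    then show ?thesis using Hop sheaf_id_bij[OF S Hop] by simp
  next
    case False
    then obtain e where eL: "e \<in> L" by blast
    have eH: "e \<in> H" and least: "\<forall>s\<in>H. s \<noteq> e \<longrightarrow> dless e s" using eL unfolding L_def by auto
    have Le: "L = {e}"
    proof
      show "L \<subseteq> {e}"
      proof
        fix e' assume e': "e' \<in> L"
        show "e' \<in> {e}"
        proof (rule ccontr)
          assume ne: "e' \<notin> {e}"
          have "dless e e'" using least e' ne unfolding L_def by auto
          moreover have "dless e' e" using e' eH ne unfolding L_def by auto
          ultimately show False using dless_asym by blast
        qed
      qed
    qed (use eL in blast)
    have snd1: "snd e = 1" using least_snd[OF oI Hb eH least] .
    obtain w where ew: "e = (w,1)" using snd1 by (metis prod.collapse)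
    have eX: "(w,1) \<in> divided_interval I W" using eH HX ew X_def by blast
    have H1eq: "H1 = H \<inter> dinterval X (Some e) None"
      unfolding H1_def Le dinterval_def using least HX by (auto dest: dless_asym)
    have "openin T (dinterval X (Some e) None)"
      unfolding T_def X_def by (rule dinterval_open) (use eX ew in auto)
    then have H1op: "openin T H1" unfolding H1eq using Hop by blast
    have "bij_betw (res H (H - {(w,1)})) (F H) (F (H - {(w,1)}))"
      apply (rule remove_point[OF LS' Hop])
      using H1op unfolding H1_def Le ew apply simp
      using eH ew apply simp
      unfolding T_def by (rule E_right[OF oI iI eX])
    then show ?thesis using H1op unfolding H1_def Le ew by simp
  qed
  have trimeq2: "trim H = H1 - G" unfolding trimeq H1_def ..
  have step2: "openin T (trim H) \<and> bij_betw (res H1 (trim H)) (F H1) (F (trim H))"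
  proof (cases "G \<inter> H1 = {}")
    case True
    then have "trim H = H1" unfolding trimeq2 by blast
    then show ?thesis using step1 sheaf_id_bij[OF S] by simp
  next
    case False
    then obtain e where eG: "e \<in> G" and eH1: "e \<in> H1" by blast
    have eH: "e \<in> H" and greatest: "\<forall>s\<in>H. s \<noteq> e \<longrightarrow> dless s e" using eG unfolding G_def by auto
    have Ge: "G = {e}"
    proof
      show "G \<subseteq> {e}"
      proof
        fix e' assume e': "e' \<in> G"
        show "e' \<in> {e}"
        proof (rule ccontr)
          assume ne: "e' \<notin> {e}"
          have "dless e' e" using greatest e' ne unfolding G_def by auto
          moreover have "dless e e'" using e' eH ne unfolding G_def by auto
          ultimately show False using dless_asym by blast
        qed
      qed
    qed (use eG in blast)
    have snd1: "snd e = -1" using greatest_snd[OF oI Hb eH greatest] .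
    obtain w where ew: "e = (w,-1)" using snd1 by (metis prod.collapse)
    have eX: "(w,-1) \<in> divided_interval I W" using eH HX ew X_def by blast
    have H1sub: "H1 \<subseteq> H" unfolding H1_def by blast
    have H2eq: "H1 - {e} = H1 \<inter> dinterval X None (Some e)"
      unfolding dinterval_def using greatest HX H1sub by (auto dest: dless_asym)
    have "openin T (dinterval X None (Some e))"
      unfolding T_def X_def by (rule dinterval_open) (use eX ew in auto)
    then have H2op: "openin T (H1 - {e})" unfolding H2eq using step1 by blast
    have "bij_betw (res H1 (H1 - {(w,-1)})) (F H1) (F (H1 - {(w,-1)}))"
      apply (rule remove_point[OF LS'])
      using step1 apply simp
      using H2op ew apply simp
      using eH1 ew apply simp
      unfolding T_def by (rule E_left[OF oI iI eX])
    moreover have "trim H = H1 - {(w,-1)}" unfolding trimeq2 Ge ew ..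
    ultimately show ?thesis using H2op ew by simp
  qed
  have "bij_betw (res H1 (trim H) \<circ> res H H1) (F H) (F (trim H))"
    using bij_betw_trans step1 step2 by blast
  moreover have "(res H1 (trim H) \<circ> res H H1) s = res H (trim H) s" if "s \<in> F H" for s
    using sheaf_comp[OF S Hop _ _ _ _ that, of H1 "trim H"] step1 step2 unfolding trimeq2 H1_def
    by auto
  ultimately show ?thesis using bij_betw_cong[of "F H" "res H1 (trim H) \<circ> res H H1" "res H (trim H)"] by blast
qed

end
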